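(* Let $N\ge2$. Let $\mathcal H$ be the set of marginal distributions $F$ (as in the context) for which the revenue function $R(x)=x(1-F(x))$ is concave on $[0,1]$. Then the Second Price Auction with $\mathrm{Beta}(\frac1{N-1},1)$ Distributed Reserves robustly dominates the posted price mechanism for $\mathcal H$: for every $F\in\mathcal H$ its revenue guarantee is at least $\max_{x\in[0,1]}x(1-F(x))$, and the inequality is strict for some $F\in\mathcal H$.
   Context: A single indivisible good is sold to $N$ bidders with private values $v_i\in[0,1]$, each with the same marginal cdf $F$ on $[0,1]$ (point masses allowed, and $F$ may be fully continuous). $\Pi(F)$ is the set of probability measures on $[0,1]^N$ with all one-dimensional marginals $F$. The revenue guarantee of a mechanism $(q,t)$ is $\inf_{\pi\in\Pi(F)}\int\sum_it_i\,d\pi$. The Second Price Auction with $\mathrm{Beta}(\frac1{N-1},1)$ Distributed Reserves: for a profile $v$ with highest value $v_{(1)}$ and second highest $v_{(2)}$, if exactly one bidder $i$ has value $v_{(1)}$ then she gets the good with probability $v_{(1)}^{1/(N-1)}$ and pays $\frac1Nv_{(1)}^{N/(N-1)}+\frac{N-1}Nv_{(2)}^{N/(N-1)}$; if $K\ge2$ bidders tie at $v_{(1)}$, each gets probability $v_{(1)}^{1/(N-1)}/K$ and pays $v_{(1)}^{N/(N-1)}/K$; all others get and pay nothing. The posted price mechanism's revenue guarantee is $\max_{x\in[0,1]}x(1-F(x))$. For a set $\mathcal H$ of marginal distributions, $M_1$ robustly dominates $M_2$ for $\mathcal H$ if the revenue guarantee of $M_1$ is weakly greater than that of $M_2$ for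 every $F\in\mathcal H$ and strictly greater for some $F\in\mathcal H$. *)

theory Defs
  imports "HOL-Probability.Probability"
begin

definition marginal_dists :: "real measure set" where
  "marginal_dists = {mu. prob_space mu \<and> sets mu = sets borel \<and> measure mu {0..1} = 1}"

definition couplings :: "real measure \<Rightarrow> (real ^ 'n) measure set" where
  "couplings mu = {pi. prob_space pi \<and> sets pi = sets borel \<and>
                       (\<forall>i. distr pi borel (\<lambda>v. v $ i) = mu)}"

definition revenue_guarantee :: "((real ^ 'n) \<Rightarrow> 'n \<Rightarrow> real) \<Rightarrow> real measure \<Rightarrow> real" where
  "revenue_guarantee t mu =
     (INF pi \<in> (couplings mu :: (real ^ 'n) measure set). integral\<^sup>L pi (\<lambda>v. \<Sum>i\<in>UNIV. t v i))"

definition spa_beta_payment :: "(real ^ 'n) \<Rightarrow> 'n \<Rightarrow> real" where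
  "spa_beta_payment v i =
     (let N = real CARD('n);
          a = N / (N - 1);
          v1 = Max (range (\<lambda>j. v $ j));
          K = card {j. v $ j = v1}
      in if v $ i = v1 then
           (if K = 1 then (1 / N) * v1 powr a
                          + ((N - 1) / N) * (Max ((\<lambda>j. v $ j) ` (UNIV - {i}))) powr a
            else v1 powr a / real K)
         else 0)"

definition posted_price_guarantee :: "real measure \<Rightarrow> real" where
  "posted_price_guarantee mu = (SUP x \<in> {0..1}. x * (1 - cdf mu x))"

definition robustly_dominates ::
  "(real measure \<Rightarrow> real) \<Rightarrow> (real measure \<Rightarrow> real) \<Rightarrow> real measure set \<Rightarrow> bool" where
  "robustly_dominates G1 G2 H \<longleftrightarrow>
     (\<forall>mu\<in>H. G2 mu \<le> G1 mu) \<and> (\<exists>mu\<in>H. G2 mu < G1 mu)"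

end

theory Submission
  imports Defs
begin

lemma vec_nth_meas[measurable]: "(\<lambda>v::real^'n. v $ i) \<in> borel_measurable borel"
  by (intro borel_measurable_continuous_onI continuous_intros)

lemma vec_lambda_meas: "(\<lambda>x::real. (\<chi> i. x) :: real^'n) \<in> borel_measurable borel"
  by (intro borel_measurable_continuous_onI continuous_intros)

definition vmax :: "real^'n \<Rightarrow> real" where "vmax v = Max (range (\<lambda>j. v $ j))"

lemma vmax_meas[measurable]: "vmax \<in> borel_measurable borel"
  unfolding vmax_def by measurable

lemma card_eq_sum: "real (card {j::'n::finite. P j}) = (\<Sum>j\<in>UNIV. if P j then 1 else 0)"
  by (simp add: sum.If_cases)

lemma pay_alt: "spa_beta_payment v i =
  (let N = real CARD('n); a = N / (N - 1) in
   if v $ i = vmax v then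
     (if (\<forall>j\<in>UNIV-{i}. v $ j \<noteq> vmax v) then (1 / N) * vmax v powr a
                          + ((N - 1) / N) * (Max ((\<lambda>j. v $ j) ` (UNIV - {i}))) powr a
      else vmax v powr a / (\<Sum>j\<in>UNIV. if v $ j = vmax v then 1 else 0))
   else 0)" for v :: "real^'n::finite"
proof -
  have "card {j. v $ j = vmax v} = 1 \<longleftrightarrow> (\<forall>j\<in>UNIV-{i}. v $ j \<noteq> vmax v)" if "v $ i = vmax v"
  proof
    assume "card {j. v $ j = vmax v} = 1"
    then obtain k where "{j. v $ j = vmax v} = {k}" by (auto simp: card_Suc_eq)
    then show "\<forall>j\<in>UNIV-{i}. v $ j \<noteq> vmax v" using that
      by (metis (mono_tags, lifting) DiffE insertI1 mem_Collect_eq singletonD)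
  next
    assume "\<forall>j\<in>UNIV-{i}. v $ j \<noteq> vmax v"
    then have "{j. v $ j = vmax v} = {i}" using that by auto
    then show "card {j. v $ j = vmax v} = 1" by simp
  qed
  then show ?thesis
    unfolding spa_beta_payment_def Let_def vmax_def[symmetric] card_eq_sum[symmetric]
    by auto
qed

lemma pay_meas[measurable]: "(\<lambda>v. spa_beta_payment v i) \<in> borel_measurable (borel :: (real^'n::finite) measure)"
  unfolding pay_alt Let_def by measurable


lemma pw_le1: "(x::real) \<in> {0..1} \<Longrightarrow> 0 < a \<Longrightarrow> x powr a \<le> 1"
  using powr_mono2[of a x 1] by auto

lemma pay_bounds:
  fixes v :: "real^'n::finite"
  assumes N2: "CARD('n) \<ge> 2" and v01: "\<And>j. v $ j \<in> {0..1}"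
  defines "N \<equiv> real CARD('n)"
  defines "a \<equiv> N / (N - 1)"
  shows "(1/N) * (\<Sum>j\<in>UNIV. (v $ j) powr a) \<le> (\<Sum>i\<in>UNIV. spa_beta_payment v i)
    \<and> (\<Sum>i\<in>UNIV. spa_beta_payment v i) \<le> 1 \<and> 0 \<le> (\<Sum>i\<in>UNIV. spa_beta_payment v i)"
proof -
  let ?m = "vmax v"
  let ?K = "(\<Sum>j\<in>UNIV. if v $ j = ?m then 1 else 0) :: real"
  have Ngt: "N \<ge> 2" using N2 unfolding N_def by simp
  have a0: "a > 0" unfolding a_def using Ngt by simp
  have le_m: "v $ j \<le> ?m" for j unfolding vmax_def by (rule Max_ge) auto
  have "?m \<in> range (\<lambda>j. v $ j)" unfolding vmax_def by (rule Max_in) auto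
  then obtain i0 where i0: "v $ i0 = ?m" by auto
  have m01: "?m \<in> {0..1}" using i0 v01[of i0] by simp
  have ma1: "?m powr a \<le> 1" using m01 a0
    by (rule pw_le1)
  have ma0: "?m powr a \<ge> 0" by simp
  have pj: "(v $ j) powr a \<le> ?m powr a" for j
    using le_m[of j] v01[of j] a0 by (intro powr_mono2) auto
  have P: "spa_beta_payment v i =
     (if v $ i = ?m then
       (if (\<forall>j\<in>UNIV-{i}. v $ j \<noteq> ?m) then (1 / N) * ?m powr a
                          + ((N - 1) / N) * (Max ((\<lambda>j. v $ j) ` (UNIV - {i}))) powr a
        else ?m powr a / ?K)
      else 0)" for i
    unfolding pay_alt Let_def N_def a_def by simp
  have cardU: "card (UNIV - {i0}) = CARD('n) - 1" by (simp add: card_Diff_singleton)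
  have cardU': "real (card (UNIV - {i0})) = N - 1" using cardU N2 unfolding N_def by simp
  have ne: "UNIV - {i0} \<noteq> {}"
  proof
    assume "UNIV - {i0} = {}"
    then have "card (UNIV - {i0}) = 0" by (metis card.empty)
    then show False using cardU N2 by simp
  qed
  have splitU: "(\<Sum>i\<in>UNIV. f i) = f i0 + (\<Sum>i\<in>UNIV-{i0}. f i)" for f :: "'n \<Rightarrow> real"
    by (simp add: sum.remove)
  show ?thesis
  proof (cases "\<forall>j\<in>UNIV-{i0}. v $ j \<noteq> ?m")
    case True
    let ?M = "Max ((\<lambda>j. v $ j) ` (UNIV - {i0}))"
    have others: "i \<in> UNIV - {i0} \<Longrightarrow> spa_beta_payment v i = 0" for i using True P[of i] by auto
    have S: "(\<Sum>i\<in>UNIV. spa_beta_payment v i) = (1 / N) * ?m powr a + ((N - 1) / N) * ?M powr a"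
      using splitU[of "spa_beta_payment v"] others P[of i0] True i0 by simp
    have "?M \<in> (\<lambda>j. v $ j) ` (UNIV - {i0})" using ne by (intro Max_in) auto
    have M01: "?M \<in> {0..1}"
      using \<open>?M \<in> _\<close> v01 by auto
    have Ma1: "?M powr a \<le> 1" using M01 a0
      by (rule pw_le1)
    have pM: "(v $ j) powr a \<le> ?M powr a" if "j \<in> UNIV - {i0}" for j
      using v01[of j] a0 that by (intro powr_mono2) (auto intro!: Max_ge)
    have "(\<Sum>j\<in>UNIV-{i0}. (v $ j) powr a) \<le> (\<Sum>j\<in>UNIV-{i0}. ?M powr a)"
      by (rule sum_mono) (rule pM)
    also have "\<dots> = (N - 1) * ?M powr a" using cardU' by simp
    finally have "(\<Sum>j\<in>UNIV. (v $ j) powr a) \<le> ?m powr a + (N - 1) * ?M powr a"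
      using splitU[of "\<lambda>j. (v $ j) powr a"] i0 by simp
    then have L: "(1/N) * (\<Sum>j\<in>UNIV. (v $ j) powr a) \<le> (1 / N) * ?m powr a + ((N - 1) / N) * ?M powr a"
      using Ngt by (simp add: field_simps)
    have U: "(1 / N) * ?m powr a + ((N - 1) / N) * ?M powr a \<le> (1/N) * 1 + ((N-1)/N) * 1"
      using Ngt ma1 Ma1 by (intro add_mono mult_left_mono) auto
    have "(1/N) * 1 + ((N-1)/N) * 1 = 1" using Ngt by (simp add: field_simps)
    then show ?thesis using S L U Ngt by simp
  next
    case False
    then obtain j1 where j1: "j1 \<noteq> i0" "v $ j1 = ?m" by auto
    have Kpos: "?K \<ge> 1"
    proof -
      have "?K \<ge> (\<Sum>j\<in>{i0}. if v $ j = ?m then 1 else 0)"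
        by (rule sum_mono2) auto
      then show ?thesis using i0 by simp
    qed
    have pay: "spa_beta_payment v i = (if v $ i = ?m then ?m powr a / ?K else 0)" for i
      using P[of i] j1 i0 by (cases "i = i0") auto
    have S: "(\<Sum>i\<in>UNIV. spa_beta_payment v i) = ?m powr a"
    proof -
      have "(\<Sum>i\<in>UNIV. spa_beta_payment v i) = (\<Sum>i\<in>UNIV. (?m powr a / ?K) * (if v $ i = ?m then 1 else 0))"
        by (rule sum.cong) (auto simp: pay)
      also have "\<dots> = (?m powr a / ?K) * ?K" by (simp add: sum_distrib_left)
      finally show ?thesis using Kpos by simp
    qed
    have "(\<Sum>j\<in>UNIV. (v $ j) powr a) \<le> (\<Sum>j\<in>(UNIV::'n set). ?m powr a)"
      by (rule sum_mono) (rule pj)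
    also have "\<dots> = N * ?m powr a" unfolding N_def by simp
    finally have "(1/N) * (\<Sum>j\<in>UNIV. (v $ j) powr a) \<le> ?m powr a"
      using Ngt by (simp add: field_simps)
    then show ?thesis using S ma1 by simp
  qed
qed


lemma mu_AE01:
  assumes "mu \<in> marginal_dists"
  shows "AE x in mu. x \<in> {0..1}"
proof -
  interpret prob_space mu using assms by (simp add: marginal_dists_def)
  show ?thesis using assms by (intro AE_prob_1) (simp add: marginal_dists_def)
qed

lemma pi_AE01:
  assumes "mu \<in> marginal_dists" "Q \<in> couplings mu"
  shows "AE v in Q. \<forall>j\<in>UNIV. (v::real^'n::finite) $ j \<in> {0..1}"
proof (rule AE_finite_allI, simp)
  fix j :: 'n
  have sp: "sets Q = sets borel" and d: "distr Q borel (\<lambda>v. v $ j) = mu"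
    using assms(2) by (auto simp: couplings_def)
  have m: "(\<lambda>v::real^'n. v $ j) \<in> measurable Q borel"
    using measurable_cong_sets[OF sp refl] vec_nth_meas by blast
  have "AE x in distr Q borel (\<lambda>v. v $ j). x \<in> {0..1}" unfolding d by (rule mu_AE01[OF assms(1)])
  from AE_distrD[OF m this] show "AE v in Q. v $ j \<in> {0..1}" .
qed

lemma rev_lower:
  fixes Q :: "(real^'n::finite) measure"
  assumes N2: "CARD('n) \<ge> 2" and mu: "mu \<in> marginal_dists" and Q: "Q \<in> couplings mu"
  defines "N \<equiv> real CARD('n)"
  defines "a \<equiv> N / (N - 1)"
  shows "integral\<^sup>L mu (\<lambda>x. x powr a) \<le> integral\<^sup>L Q (\<lambda>v. \<Sum>i\<in>UNIV. spa_beta_payment v i)"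
proof -
  have Ngt: "N \<ge> 2" using N2 unfolding N_def by simp
  have a0: "a > 0" unfolding a_def using Ngt by simp
  interpret prob_space Q using Q by (simp add: couplings_def)
  have sp: "sets Q = sets borel" and d: "\<And>j. distr Q borel (\<lambda>v. v $ j) = mu"
    using Q by (auto simp: couplings_def)
  have smu: "sets mu = sets borel" using mu by (simp add: marginal_dists_def)
  have mj: "(\<lambda>v::real^'n. v $ j) \<in> measurable Q borel" for j
    using measurable_cong_sets[OF sp refl] vec_nth_meas by blast
  have mP: "(\<lambda>v. \<Sum>i\<in>UNIV. spa_beta_payment v i) \<in> borel_measurable Q"
    unfolding measurable_cong_sets[OF sp refl] by measurable
  have mQ: "(\<lambda>v. (1/N) * (\<Sum>j\<in>UNIV. (v $ j) powr a)) \<in> borel_measurable Q"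
    unfolding measurable_cong_sets[OF sp refl] by measurable
  note AE01 = pi_AE01[OF mu Q]
  have bnd: "AE v in Q. (1/N) * (\<Sum>j\<in>UNIV. (v $ j) powr a) \<le> (\<Sum>i\<in>UNIV. spa_beta_payment v i)
    \<and> (\<Sum>i\<in>UNIV. spa_beta_payment v i) \<le> 1 \<and> 0 \<le> (\<Sum>i\<in>UNIV. spa_beta_payment v i)"
    using AE01 by eventually_elim (use pay_bounds[OF N2] in \<open>auto simp: N_def a_def\<close>)
  have intP: "integrable Q (\<lambda>v. \<Sum>i\<in>UNIV. spa_beta_payment v i)"
  proof (rule integrable_const_bound[where B=1])
    show "AE x in Q. norm (\<Sum>i\<in>UNIV. spa_beta_payment x i) \<le> 1"
      using bnd by eventually_elim auto
  qed (rule mP)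
  have intj: "integrable Q (\<lambda>v. (v $ j) powr a)" for j
  proof (rule integrable_const_bound[where B=1])
    show "AE v in Q. norm ((v $ j) powr a) \<le> 1"
      using AE01 by eventually_elim (use pw_le1 a0 in auto)
    show "(\<lambda>v. (v $ j) powr a) \<in> borel_measurable Q" unfolding measurable_cong_sets[OF sp refl] by measurable
  qed
  have intQ: "integrable Q (\<lambda>v. (1/N) * (\<Sum>j\<in>UNIV. (v $ j) powr a))"
    using intj by auto
  have "integral\<^sup>L Q (\<lambda>v. (1/N) * (\<Sum>j\<in>UNIV. (v $ j) powr a))
      = (1/N) * (\<Sum>j\<in>UNIV. integral\<^sup>L Q (\<lambda>v. (v $ j) powr a))"
    by (simp add: integral_sum intj)
  also have "\<dots> = (1/N) * (\<Sum>j\<in>(UNIV::'n set). integral\<^sup>L mu (\<lambda>x. x powr a))"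
  proof -
    have "integral\<^sup>L Q (\<lambda>v. (v $ j) powr a) = integral\<^sup>L mu (\<lambda>x. x powr a)" for j
    proof -
      have "integral\<^sup>L (distr Q borel (\<lambda>v. v $ j)) (\<lambda>x. x powr a) = integral\<^sup>L Q (\<lambda>v. (v $ j) powr a)"
        by (rule integral_distr[OF mj]) measurable
      then show ?thesis using d[of j] by simp
    qed
    then show ?thesis by simp
  qed
  also have "\<dots> = integral\<^sup>L mu (\<lambda>x. x powr a)" using Ngt unfolding N_def by simp
  finally have eq: "integral\<^sup>L Q (\<lambda>v. (1/N) * (\<Sum>j\<in>UNIV. (v $ j) powr a)) = integral\<^sup>L mu (\<lambda>x. x powr a)" .
  have "integral\<^sup>L Q (\<lambda>v. (1/N) * (\<Sum>j\<in>UNIV. (v $ j) powr a)) \<le> integral\<^sup>L Q (\<lambda>v. \<Sum>i\<in>UNIV. spa_beta_payment v i)"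
    by (rule integral_mono_AE[OF intQ intP]) (use bnd in \<open>auto elim!: eventually_mono\<close>)
  then show ?thesis using eq by simp
qed


lemma ftc_nn:
  fixes F f :: "real \<Rightarrow> real"
  assumes "l \<le> u" "continuous_on {l..u} F"
    "\<And>t. t \<in> {l<..<u} \<Longrightarrow> (F has_real_derivative f t) (at t)"
    "\<And>t. t \<in> {l..u} \<Longrightarrow> 0 \<le> f t" "f \<in> borel_measurable borel"
  shows "(\<integral>\<^sup>+t. ennreal (f t) * indicator {l..u} t \<partial>lborel) = ennreal (F u - F l)"
proof -
  have "(f has_integral (F u - F l)) {l..u}"
    using assms(1,2,3) by (intro fundamental_theorem_of_calculus_interior)
      (auto simp: has_real_derivative_iff_has_vector_derivative[symmetric])
  then have I: "((\<lambda>t. if t \<in> {l..u} then f t else 0) has_integral (F u - F l)) UNIV"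
    by (simp only: has_integral_restrict_UNIV)
  have "integral\<^sup>N lborel (\<lambda>t. if t \<in> {l..u} then f t else 0) = F u - F l"
    by (rule nn_integral_has_integral_lborel[OF _ _ I]) (use assms(4,5) in auto)
  moreover have "(\<integral>\<^sup>+t. ennreal (f t) * indicator {l..u} t \<partial>lborel)
      = integral\<^sup>N lborel (\<lambda>t. if t \<in> {l..u} then f t else 0)"
    by (rule nn_integral_cong) (auto simp: indicator_def)
  ultimately show ?thesis by simp
qed

lemma bern_powr:
  fixes x b :: real
  assumes "0 < x" "0 \<le> b" "b \<le> 1"
  shows "x powr b \<le> 1 - b + b * x"
proof -
  have "exp ((1 - b) * 0 + b * ln x) \<le> (1 - b) * exp 0 + b * exp (ln x)"
    using convex_onD[OF exp_convex, of b 0 "ln x"] assms by auto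
  then show ?thesis using assms by (simp add: powr_def)
qed

lemma ennreal_add_le: "ennreal (x + y) \<le> ennreal x + ennreal y"
proof (cases "x \<ge> 0 \<and> y \<ge> 0")
  case True then show ?thesis by (simp add: ennreal_plus)
next
  case False
  then have "x + y \<le> x \<or> x + y \<le> y" by auto
  then show ?thesis
    by (metis add.commute add_increasing2 ennreal_leI zero_le)
qed


lemma layer:
  assumes mu: "mu \<in> marginal_dists" and a: "a > 0"
  shows "(\<integral>\<^sup>+x. ennreal (x powr a) \<partial>mu)
       = (\<integral>\<^sup>+t. ennreal (a * t powr (a-1)) * indicator {0..} t * emeasure mu {t..} \<partial>lborel)"
proof -
  interpret prob_space mu using mu by (simp add: marginal_dists_def)
  have smu: "sets mu = sets borel" using mu by (simp add: marginal_dists_def)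
  interpret pair_sigma_finite mu lborel
    by (simp add: pair_sigma_finite_def sigma_finite_measure_axioms lborel.sigma_finite_measure_axioms)
  define K where "K x t = (if 0 \<le> t \<and> t \<le> x then ennreal (a * t powr (a-1)) else 0)" for x t :: real
  have Keq: "K x t = ennreal (a * t powr (a-1)) * indicator {0..} t * indicator {t..} x" for x t
    by (simp add: K_def indicator_def)
  have Kmeas: "case_prod K \<in> borel_measurable (mu \<Otimes>\<^sub>M lborel)"
  proof -
    have "case_prod K \<in> borel_measurable (borel \<Otimes>\<^sub>M borel)"
      unfolding K_def by measurable
    moreover have "sets (mu \<Otimes>\<^sub>M lborel) = sets (borel \<Otimes>\<^sub>M borel)"
      by (rule sets_pair_measure_cong) (auto simp: smu)
    ultimately show ?thesis using measurable_cong_sets by blast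
  qed
  have inner1: "(\<integral>\<^sup>+t. K x t \<partial>lborel) = ennreal (x powr a)" if "x \<ge> 0" for x
  proof -
    have "(\<integral>\<^sup>+t. K x t \<partial>lborel) = (\<integral>\<^sup>+t. ennreal (a * t powr (a-1)) * indicator {0..x} t \<partial>lborel)"
      by (rule nn_integral_cong) (auto simp: Keq indicator_def)
    also have "\<dots> = ennreal (x powr a - 0 powr a)"
    proof (rule ftc_nn)
      show "continuous_on {0..x} (\<lambda>t. t powr a)"
        using a by (intro continuous_on_powr' continuous_intros) auto
      show "((\<lambda>t. t powr a) has_real_derivative a * t powr (a - 1)) (at t)" if "t \<in> {0<..<x}" for t
        using that has_real_derivative_powr[of t a] by auto
    qed (use that a in auto)
    finally show ?thesis by simp
  qed
  have inner2: "(\<integral>\<^sup>+x. K x t \<partial>mu) = ennreal (a * t powr (a-1)) * indicator {0..} t * emeasure mu {t..}" for t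
  proof -
    have "(\<integral>\<^sup>+x. K x t \<partial>mu) = ennreal (a * t powr (a-1)) * indicator {0..} t * (\<integral>\<^sup>+x. indicator {t..} x \<partial>mu)"
      unfolding Keq by (subst nn_integral_cmult) (auto simp: smu intro!: borel_measurable_indicator)
    also have "\<dots> = ennreal (a * t powr (a-1)) * indicator {0..} t * emeasure mu {t..}"
      by (subst nn_integral_indicator) (auto simp: smu)
    finally show ?thesis .
  qed
  have "(\<integral>\<^sup>+x. ennreal (x powr a) \<partial>mu) = (\<integral>\<^sup>+x. (\<integral>\<^sup>+t. K x t \<partial>lborel) \<partial>mu)"
  proof (rule nn_integral_cong_AE)
    show "AE x in mu. ennreal (x powr a) = (\<integral>\<^sup>+t. K x t \<partial>lborel)"
      using mu_AE01[OF mu] by eventually_elim (simp add: inner1)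
  qed
  also have "\<dots> = (\<integral>\<^sup>+t. (\<integral>\<^sup>+x. K x t \<partial>mu) \<partial>lborel)"
    using Fubini'[of K, OF Kmeas] by simp
  also have "\<dots> = (\<integral>\<^sup>+t. ennreal (a * t powr (a-1)) * indicator {0..} t * emeasure mu {t..} \<partial>lborel)"
    by (simp add: inner2)
  finally show ?thesis .
qed


lemma alg_ineq:
  fixes x0 b c p :: real
  assumes "0 < x0" "x0 < 1" "0 < b" "c \<ge> 0" "p \<le> 1 - b + b * x0"
  shows "c \<le> c / x0 * (x0 * p) + c / (1 - x0) * ((b + 1) / b - 1 - ((b + 1) / b * p - x0 * p))"
proof -
  have e: "c / x0 * (x0 * p) + c / (1 - x0) * ((b + 1) / b - 1 - ((b + 1) / b * p - x0 * p)) - c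
      = c / (1 - x0) * ((1 - p) / b - (1 - x0))"
    using assms by (simp add: field_simps) (simp add: algebra_simps)?
  have "(1 - p) / b - (1 - x0) \<ge> 0"
  proof -
    have "1 - p \<ge> b * (1 - x0)" using assms(5) by (simp add: algebra_simps)
    then show ?thesis using assms(3) by (simp add: field_simps)
  qed
  then have "c / (1 - x0) * ((1 - p) / b - (1 - x0)) \<ge> 0" using assms by simp
  then show ?thesis using e by linarith
qed


lemma mu_lower:
  assumes mu: "mu \<in> marginal_dists"
    and conc: "concave_on {0..1} (\<lambda>x. x * (1 - cdf mu x))"
    and a1: "1 < a" and a2: "a \<le> 2" and x0: "x0 \<in> {0..1}"
  shows "x0 * (1 - cdf mu x0) \<le> integral\<^sup>L mu (\<lambda>x. x powr a)"
proof -
  interpret prob_space mu using mu by (simp add: marginal_dists_def)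
  have smu: "sets mu = sets borel" using mu by (simp add: marginal_dists_def)
  have spc: "space mu = UNIV" using sets_eq_imp_space_eq[OF smu] by simp
  have m01: "measure mu {0..1} = 1" using mu by (simp add: marginal_dists_def)
  define R where "R x = x * (1 - cdf mu x)" for x
  define c where "c = R x0"
  have tail: "1 - cdf mu t = measure mu {t<..}" for t
  proof -
    have "measure mu (space mu - {..t}) = 1 - measure mu {..t}"
      by (rule prob_compl) (simp add: smu)
    moreover have "space mu - {..t} = {t<..}" using spc by auto
    ultimately show ?thesis by (simp add: cdf_def2)
  qed
  have tl: "1 - cdf mu t \<le> measure mu {t..}" for t
    unfolding tail by (rule finite_measure_mono) (auto simp: smu)
  have cdf1: "cdf mu 1 = 1"
  proof -
    have "measure mu {0..1} \<le> measure mu {..1}"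
      by (rule finite_measure_mono) (auto simp: smu)
    moreover have "measure mu {..1} \<le> 1" by simp
    ultimately show ?thesis using m01 by (simp add: cdf_def2)
  qed
  have R1: "R 1 = 0" by (simp add: R_def cdf1)
  have R0: "R 0 = 0" by (simp add: R_def)
  have intg: "integrable mu (\<lambda>x. x powr a)"
  proof (rule integrable_const_bound[where B=1])
    show "AE x in mu. norm (x powr a) \<le> 1"
      using mu_AE01[OF mu] by eventually_elim (use pw_le1 a1 in auto)
    show "(\<lambda>x. x powr a) \<in> borel_measurable mu" by (simp add: measurable_cong_sets[OF smu refl])
  qed
  have Enn: "(\<integral>\<^sup>+x. ennreal (x powr a) \<partial>mu) = ennreal (integral\<^sup>L mu (\<lambda>x. x powr a))"
    by (rule nn_integral_eq_integral[OF intg]) simp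
  have E0: "integral\<^sup>L mu (\<lambda>x. x powr a) \<ge> 0" by (rule Bochner_Integration.integral_nonneg) simp
  show ?thesis
  proof (cases "c \<le> 0")
    case True then show ?thesis using E0 unfolding c_def R_def by linarith
  next
    case False
    then have cpos: "c > 0" by simp
    have x00: "x0 \<noteq> 0" using cpos R0 by (auto simp: c_def)
    have x01: "x0 \<noteq> 1" using cpos R1 by (auto simp: c_def)
    have x0i: "0 < x0" "x0 < 1" using x0 x00 x01 by auto
    define g1 where "g1 t = a * t powr (a-1) * (c / x0)" for t
    define g2 where "g2 t = c / (1 - x0) * (a * t powr (a - 2) - a * t powr (a - 1))" for t
    define F1 where "F1 t = c / x0 * t powr a" for t
    define F2 where "F2 t = c / (1 - x0) * (a / (a - 1) * t powr (a - 1) - t powr a)" for t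
    define G where "G t = ennreal (g1 t) * indicator {0..x0} t + ennreal (g2 t) * indicator {x0..1} t" for t
    have pw2: "t powr (a - 1) = t powr (a - 2) * t" if "t > 0" for t :: real
    proof -
      have "t powr (a - 1) = t powr ((a - 2) + 1)" by simp
      also have "\<dots> = t powr (a - 2) * t powr 1" by (rule powr_add)
      also have "\<dots> = t powr (a - 2) * t" using that by simp
      finally show ?thesis .
    qed
    have g2alt: "g2 t = a * t powr (a - 1) * (c * (1 - t) / ((1 - x0) * t))" if "t > 0" for t
      using that x0i unfolding g2_def pw2[OF that] by (simp add: field_simps)
    have rhs: "ennreal (a * t powr (a-1)) * indicator {0..} t * emeasure mu {t..}
        = ennreal (a * t powr (a-1) * measure mu {t..})" if "t \<ge> 0" for t
      using that a1 by (simp add: emeasure_eq_measure ennreal_mult'')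
    have pt: "G t \<le> ennreal (a * t powr (a-1)) * indicator {0..} t * emeasure mu {t..}" if tx: "t \<noteq> x0" for t
    proof -
      consider "t < 0" | "0 \<le> t" "t < x0" | "x0 < t" "t \<le> 1" | "1 < t" using tx by linarith
      then show ?thesis
      proof cases
        case 1 then show ?thesis using x0i by (simp add: G_def indicator_def)
      next
        case 2
        then have G: "G t = ennreal (g1 t)" by (simp add: G_def indicator_def)
        have "c / x0 = 1 - cdf mu x0" using x0i by (simp add: c_def R_def)
        also have "\<dots> = measure mu {x0<..}" by (rule tail)
        also have "\<dots> \<le> measure mu {t..}" using 2 by (intro finite_measure_mono) (auto simp: smu)
        finally have "g1 t \<le> a * t powr (a-1) * measure mu {t..}"
          unfolding g1_def using a1 by (intro mult_left_mono) auto
        then show ?thesis using G rhs[of t] 2 by (simp add: ennreal_leI)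
      next
        case 3
        then have G: "G t = ennreal (g2 t)" using x0i by (simp add: G_def indicator_def)
        define l where "l = (t - x0) / (1 - x0)"
        have l01: "0 \<le> l" "l \<le> 1" using 3 x0i by (auto simp: l_def field_simps)
        have lx: "l * (1 - x0) = t - x0" using x0i by (simp add: l_def)
        have tl': "(1 - l) * x0 + l * 1 = t" using lx by (simp add: algebra_simps)
        have "(1 - l) * R x0 + l * R 1 \<le> R ((1 - l) *\<^sub>R x0 + l *\<^sub>R 1)"
          using concave_onD[OF conc, of l x0 1] l01 x0 unfolding R_def by auto
        then have "(1 - l) * c \<le> R t" using tl' R1 by (simp add: c_def)
        moreover have "1 - l = (1 - t) / (1 - x0)" using x0i by (simp add: l_def field_simps)
        ultimately have "c * (1 - t) / (1 - x0) \<le> t * (1 - cdf mu t)" by (simp add: R_def mult.commute)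
        then have "c * (1 - t) / ((1 - x0) * t) \<le> 1 - cdf mu t"
          using 3 x0i by (simp add: field_simps)
        also have "\<dots> \<le> measure mu {t..}" by (rule tl)
        finally have q: "c * (1 - t) / ((1 - x0) * t) \<le> measure mu {t..}" .
        have "g2 t \<le> a * t powr (a-1) * measure mu {t..}"
        proof -
          have "a * t powr (a - 1) * (c * (1 - t) / ((1 - x0) * t)) \<le> a * t powr (a-1) * measure mu {t..}"
            using q a1 by (intro mult_left_mono) auto
          then show ?thesis using g2alt[of t] 3 x0i by simp
        qed
        then show ?thesis using G rhs[of t] 3 x0i by (simp add: ennreal_leI)
      next
        case 4 then show ?thesis using x0i by (simp add: G_def indicator_def)
      qed
    qed
    have "(\<integral>\<^sup>+t. G t \<partial>lborel) \<le> (\<integral>\<^sup>+t. ennreal (a * t powr (a-1)) * indicator {0..} t * emeasure mu {t..} \<partial>lborel)"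
      by (rule nn_integral_mono_AE) (use AE_lborel_singleton[of x0] pt in \<open>auto elim!: eventually_mono\<close>)
    also have "\<dots> = ennreal (integral\<^sup>L mu (\<lambda>x. x powr a))"
      using layer[OF mu, of a] a1 Enn by simp
    finally have up: "(\<integral>\<^sup>+t. G t \<partial>lborel) \<le> ennreal (integral\<^sup>L mu (\<lambda>x. x powr a))" .
    have I1: "(\<integral>\<^sup>+t. ennreal (g1 t) * indicator {0..x0} t \<partial>lborel) = ennreal (F1 x0 - F1 0)"
    proof (rule ftc_nn)
      show "continuous_on {0..x0} F1" unfolding F1_def
        using a1 by (intro continuous_on_powr' continuous_intros) auto
      show "(F1 has_real_derivative g1 t) (at t)" if "t \<in> {0<..<x0}" for t
        unfolding F1_def
        by (rule DERIV_cong[OF DERIV_cmult[OF has_real_derivative_powr[of t a]]])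
           (use that in \<open>auto simp: g1_def\<close>)
      show "g1 \<in> borel_measurable borel" unfolding g1_def by measurable
    qed (use x0i a1 cpos in \<open>auto simp: g1_def\<close>)
    have I2: "(\<integral>\<^sup>+t. ennreal (g2 t) * indicator {x0..1} t \<partial>lborel) = ennreal (F2 1 - F2 x0)"
    proof (rule ftc_nn)
      show "continuous_on {x0..1} F2" unfolding F2_def
        using a1 x0i by (intro continuous_on_powr' continuous_intros) auto
      show "(F2 has_real_derivative g2 t) (at t)" if "t \<in> {x0<..<1}" for t
      proof -
        have tp: "t > 0" using that x0i by auto
        have "((\<lambda>t. a / (a - 1) * t powr (a - 1) - t powr a) has_real_derivative
              a / (a - 1) * ((a - 1) * t powr (a - 1 - 1)) - a * t powr (a - 1)) (at t)"
          by (intro DERIV_diff DERIV_cmult has_real_derivative_powr tp)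
        then show ?thesis unfolding F2_def
          by (rule DERIV_cong[OF DERIV_cmult]) (use a1 in \<open>auto simp: g2_def diff_diff_eq\<close>)
      qed
      show "g2 \<in> borel_measurable borel" unfolding g2_def by measurable
      show "0 \<le> g2 t" if "t \<in> {x0..1}" for t
      proof -
        have tp: "t > 0" using that x0i by auto
        have "t powr (a - 1) \<le> t powr (a - 2)"
          using pw2[OF tp] that mult_left_mono[of t 1 "t powr (a-2)"] by auto
        then show ?thesis unfolding g2_def using x0i cpos a1 by (intro mult_nonneg_nonneg) auto
      qed
    qed (use x0i in auto)
    have Gsplit: "(\<integral>\<^sup>+t. G t \<partial>lborel) = ennreal (F1 x0 - F1 0) + ennreal (F2 1 - F2 x0)"
      unfolding G_def I1[symmetric] I2[symmetric]
      by (rule nn_integral_add) (auto simp: g1_def g2_def)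
    have "c \<le> (F1 x0 - F1 0) + (F2 1 - F2 x0)"
    proof -
      define b where "b = a - 1"
      define p where "p = x0 powr b"
      have bp: "0 < b" "b \<le> 1" using a1 a2 by (auto simp: b_def)
      have ab: "a = b + 1" by (simp add: b_def)
      have xa: "x0 powr a = x0 * p" unfolding p_def ab using x0i by (simp add: powr_add)
      have pb: "p \<le> 1 - b + b * x0" unfolding p_def using bern_powr[of x0 b] x0i bp by simp
      have "(F1 x0 - F1 0) + (F2 1 - F2 x0)
          = c / x0 * (x0 * p) + c / (1 - x0) * ((b + 1) / b - 1 - ((b + 1) / b * p - x0 * p))"
      proof -
        have f1: "F1 x0 = c / x0 * (x0 * p)" unfolding F1_def xa ..
        have f0: "F1 0 = 0" unfolding F1_def using a1 by simp
        have f21: "F2 1 = c / (1 - x0) * ((b + 1) / b - 1)" unfolding F2_def by (simp add: ab)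
        have f2x: "F2 x0 = c / (1 - x0) * ((b + 1) / b * p - x0 * p)"
          unfolding F2_def xa by (simp add: ab p_def)
        show ?thesis unfolding f1 f0 f21 f2x by (simp only: right_diff_distrib diff_zero)
      qed
      also have "c \<le> \<dots>" by (rule alg_ineq) (use x0i bp cpos pb in auto)
      finally show ?thesis by simp
    qed
    then have "ennreal c \<le> ennreal (F1 x0 - F1 0) + ennreal (F2 1 - F2 x0)"
      using ennreal_leI ennreal_add_le order_trans by blast
    then have "ennreal c \<le> ennreal (integral\<^sup>L mu (\<lambda>x. x powr a))" using Gsplit up by (metis order_trans)
    then have "c \<le> integral\<^sup>L mu (\<lambda>x. x powr a)" using E0 ennreal_le_iff by blast
    then show ?thesis by (simp add: c_def R_def)
  qed
qed


lemma couplings_ne: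
  assumes mu: "mu \<in> marginal_dists"
  shows "(couplings mu :: (real^'n::finite) measure set) \<noteq> {}"
proof -
  interpret prob_space mu using mu by (simp add: marginal_dists_def)
  have smu: "sets mu = sets borel" using mu by (simp add: marginal_dists_def)
  define f where "f = (\<lambda>x::real. (\<chi> i. x) :: real^'n)"
  have fm: "f \<in> measurable mu borel"
    unfolding f_def measurable_cong_sets[OF smu refl] by (rule vec_lambda_meas)
  have "distr mu borel f \<in> couplings mu"
    unfolding couplings_def
  proof (intro CollectI conjI allI)
    show "prob_space (distr mu borel f)" by (rule prob_space_distr[OF fm])
    show "sets (distr mu borel f) = sets borel" by simp
    fix i
    have "distr (distr mu borel f) borel (\<lambda>v. v $ i) = distr mu borel ((\<lambda>v. v $ i) \<circ> f)"
      by (rule distr_distr[OF _ fm]) simp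
    also have "\<dots> = distr mu borel (\<lambda>x. x)" by (simp add: f_def o_def)
    also have "\<dots> = mu" by (rule distr_id2) (simp add: smu)
    finally show "distr (distr mu borel f) borel (\<lambda>v. v $ i) = mu" .
  qed
  then show ?thesis by blast
qed

lemma rg_lower:
  assumes N2: "CARD('n::finite) \<ge> 2" and mu: "mu \<in> marginal_dists"
  shows "integral\<^sup>L mu (\<lambda>x. x powr (real CARD('n) / (real CARD('n) - 1)))
     \<le> revenue_guarantee (spa_beta_payment :: real ^ 'n \<Rightarrow> 'n \<Rightarrow> real) mu"
  unfolding revenue_guarantee_def
  by (rule cINF_greatest[OF couplings_ne[OF mu]]) (rule rev_lower[OF N2 mu])

lemma a_bounds:
  assumes "CARD('n::finite) \<ge> 2"
  shows "1 < real CARD('n) / (real CARD('n) - 1)" "real CARD('n) / (real CARD('n) - 1) \<le> 2"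
proof -
  have N: "real CARD('n) \<ge> 2" using assms by simp
  then show "1 < real CARD('n) / (real CARD('n) - 1)" by (simp add: field_simps)
  show "real CARD('n) / (real CARD('n) - 1) \<le> 2" using N by (simp add: field_simps)
qed

definition U01 :: "real measure" where "U01 = uniform_measure lborel {0..1}"

lemma U01_props:
  shows "U01 \<in> marginal_dists" and "\<And>x. x \<in> {0..1} \<Longrightarrow> cdf U01 x = x"
proof -
  have e: "emeasure lborel {0..1::real} = 1" by simp
  show "U01 \<in> marginal_dists"
    unfolding marginal_dists_def U01_def
    by (auto intro!: prob_space_uniform_measure simp: e)
  fix x :: real assume x: "x \<in> {0..1}"
  have "cdf U01 x = measure lborel ({0..1} \<inter> {..x}) / measure lborel {0..1::real}"
    unfolding cdf_def2 U01_def by (rule measure_uniform_measure) (auto simp: e)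
  also have "{0..1} \<inter> {..x} = {0..x}" using x by auto
  finally show "cdf U01 x = x" using x by simp
qed

lemma U01_conc: "concave_on {0..1} (\<lambda>x. x * (1 - cdf U01 x))"
  unfolding concave_on_iff
proof (intro conjI ballI allI impI)
  show "convex {0..1::real}" by simp
  fix x y u v :: real
  assume xy: "x \<in> {0..1}" "y \<in> {0..1}" and uv: "0 \<le> u" "0 \<le> v" "u + v = 1"
  have z: "u *\<^sub>R x + v *\<^sub>R y \<in> {0..1}"
    using convexD[OF convex_real_interval(5)[of 0 1] xy uv(1,2,3)] by simp
  have v: "v = 1 - u" using uv by simp
  have "u * (x * (1 - x)) + v * (y * (1 - y)) + u * (1 - u) * (x - y)^2
      = (u * x + v * y) * (1 - (u * x + v * y))"
    unfolding v by (simp add: algebra_simps power2_eq_square)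
  moreover have "u * (1 - u) * (x - y)^2 \<ge> 0" using uv by simp
  ultimately have "u * (x * (1 - x)) + v * (y * (1 - y)) \<le> (u * x + v * y) * (1 - (u * x + v * y))"
    by linarith
  then show "u * (x * (1 - cdf U01 x)) + v * (y * (1 - cdf U01 y))
      \<le> (u *\<^sub>R x + v *\<^sub>R y) * (1 - cdf U01 (u *\<^sub>R x + v *\<^sub>R y))"
    using U01_props(2)[OF xy(1)] U01_props(2)[OF xy(2)] U01_props(2)[OF z] by simp
qed

lemma U01_posted: "posted_price_guarantee U01 \<le> 1/4"
  unfolding posted_price_guarantee_def
proof (rule cSUP_least)
  show "{0..1::real} \<noteq> {}" by simp
  fix x :: real assume x: "x \<in> {0..1}"
  have "(x - 1/2)^2 \<ge> 0" by simp
  then have "x * (1 - x) \<le> 1/4" by (simp add: algebra_simps power2_eq_square)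
  then show "x * (1 - cdf U01 x) \<le> 1/4" using U01_props(2)[OF x] by simp
qed

lemma U01_int:
  assumes a: "a > 0"
  shows "integral\<^sup>L U01 (\<lambda>x. x powr a) = 1 / (a + 1)"
proof -
  have smu: "sets U01 = sets borel" by (simp add: U01_def)
  interpret prob_space U01 using U01_props(1) by (simp add: marginal_dists_def)
  have intg: "integrable U01 (\<lambda>x. x powr a)"
  proof (rule integrable_const_bound[where B=1])
    show "AE x in U01. norm (x powr a) \<le> 1"
      using mu_AE01[OF U01_props(1)] by eventually_elim (use pw_le1 a in auto)
    show "(\<lambda>x. x powr a) \<in> borel_measurable U01" by (simp add: measurable_cong_sets[OF smu refl])
  qed
  have "(\<integral>\<^sup>+x. ennreal (x powr a) \<partial>U01) = (\<integral>\<^sup>+x. ennreal (x powr a) * indicator {0..1} x \<partial>lborel) / emeasure lborel {0..1::real}"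
    unfolding U01_def by (rule nn_integral_uniform_measure) auto
  also have "\<dots> = (\<integral>\<^sup>+x. ennreal (x powr a) * indicator {0..1} x \<partial>lborel)" by (simp add: divide_ennreal_def)
  also have "\<dots> = ennreal (1 powr (a + 1) / (a + 1) - 0 powr (a + 1) / (a + 1))"
  proof (rule ftc_nn)
    show "continuous_on {0..1} (\<lambda>t. t powr (a + 1) / (a + 1))"
      using a by (intro continuous_on_powr' continuous_intros) auto
    show "((\<lambda>t. t powr (a + 1) / (a + 1)) has_real_derivative t powr a) (at t)" if "t \<in> {0<..<1}" for t
      by (rule DERIV_cong[OF DERIV_cdivide[OF has_real_derivative_powr]]) (use that a in auto)
  qed auto
  also have "\<dots> = ennreal (1 / (a + 1))" by simp
  finally have "ennreal (integral\<^sup>L U01 (\<lambda>x. x powr a)) = ennreal (1 / (a + 1))"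
    using nn_integral_eq_integral[OF intg] by simp
  moreover have "integral\<^sup>L U01 (\<lambda>x. x powr a) \<ge> 0" by (rule Bochner_Integration.integral_nonneg) simp
  ultimately show ?thesis using a by (simp add: ennreal_inj)
qed

theorem proposition2:
  assumes "CARD('n::finite) \<ge> 2"
  shows "robustly_dominates
           (revenue_guarantee (spa_beta_payment :: real ^ 'n \<Rightarrow> 'n \<Rightarrow> real))
           posted_price_guarantee
           {mu \<in> marginal_dists. concave_on {0..1} (\<lambda>x. x * (1 - cdf mu x))}"
  unfolding robustly_dominates_def
proof (intro conjI ballI bexI)
  let ?a = "real CARD('n) / (real CARD('n) - 1)"
  have a: "1 < ?a" "?a \<le> 2" using a_bounds[OF assms] by auto
  fix mu assume "mu \<in> {mu \<in> marginal_dists. concave_on {0..1} (\<lambda>x. x * (1 - cdf mu x))}"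
  then have mu: "mu \<in> marginal_dists" and conc: "concave_on {0..1} (\<lambda>x. x * (1 - cdf mu x))" by auto
  have "posted_price_guarantee mu \<le> integral\<^sup>L mu (\<lambda>x. x powr ?a)"
    unfolding posted_price_guarantee_def
    by (rule cSUP_least) (auto intro: mu_lower[OF mu conc a])
  also have "\<dots> \<le> revenue_guarantee (spa_beta_payment :: real ^ 'n \<Rightarrow> 'n \<Rightarrow> real) mu"
    by (rule rg_lower[OF assms mu])
  finally show "posted_price_guarantee mu \<le> revenue_guarantee (spa_beta_payment :: real ^ 'n \<Rightarrow> 'n \<Rightarrow> real) mu" .
next
  let ?a = "real CARD('n) / (real CARD('n) - 1)"
  have a: "1 < ?a" "?a \<le> 2" using a_bounds[OF assms] by auto
  show "U01 \<in> {mu \<in> marginal_dists. concave_on {0..1} (\<lambda>x. x * (1 - cdf mu x))}"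
    using U01_props(1) U01_conc by simp
  have "posted_price_guarantee U01 \<le> 1/4" by (rule U01_posted)
  also have "1/4 < 1 / (?a + 1)" using a by (simp add: field_simps)
  also have "1 / (?a + 1) = integral\<^sup>L U01 (\<lambda>x. x powr ?a)" using a by (simp add: U01_int)
  also have "\<dots> \<le> revenue_guarantee (spa_beta_payment :: real ^ 'n \<Rightarrow> 'n \<Rightarrow> real) U01"
    by (rule rg_lower[OF assms U01_props(1)])
  finally show "posted_price_guarantee U01 < revenue_guarantee (spa_beta_payment :: real ^ 'n \<Rightarrow> 'n \<Rightarrow> real) U01" .
qed

end
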